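(* Let $p$ be a prime, $n\ge 1$, and let $A_r$ and $A_s$ be symmetric $n\times n$ matrices with entries in $\mathbb{Z}_p$. If $\det(A_r-A_s)\neq 0 \pmod p$, then the graph-state bases $\mathcal{B}_{A_r}$ and $\mathcal{B}_{A_s}$ of $(\mathbb{C}^p)^{\otimes n}$ are mutually unbiased, i.e. $|\langle G_{A_r}(m_1,\dots,m_n)|G_{A_s}(m'_1,\dots,m'_n)\rangle|^2 = 1/p^n$ for all $m_i,m'_i\in\mathbb{Z}_p$.
   Context: Let $\omega_p=e^{2\pi i/p}$. On $\mathbb{C}^p$ with computational basis $\{|0\rangle,\dots,|p-1\rangle\}$ let $|+\rangle=p^{-1/2}\sum_{k=0}^{p-1}|k\rangle$ and $Z=\sum_k \omega_p^k|k\rangle\langle k|$. On $(\mathbb{C}^p)^{\otimes n}$ define the one-qupit phase gates $U_{i,i}=\sum_{k=0}^{1} i^k|k\rangle\langle k|_i$ if $p=2$ (here $i=\sqrt{-1}$ in the phase) and $U_{i,i}=\sum_{k=0}^{p-1}\omega_p^{k(k-1)/2}|k\rangle\langle k|_i$ if $p\ge 3$, and for $i\neq j$ the controlled-phase gates $U_{i,j}=\sum_{k,l=0}^{p-1}\omega_p^{kl}|k\rangle\langle k|_i\otimes|l\rangle\langle l|_j$ (subscripts indicate the tensor factor acted upon). For a symmetric $n\times n$ matrix $A$ over $\mathbb{Z}_p$ (entries viewed as integers in $\{0,\dots,p-1\}$), the generalized graph state is $|G_A\rangle=\prod_{i\le j}U_{i,j}^{A_{i,j}}|+\rangle^{\otimes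 n}$, and the graph-state basis is $\mathcal{B}_A=\{|G_A(m_1,\dots,m_n)\rangle\}_{m_i\in\mathbb{Z}_p}$ with $|G_A(m_1,\dots,m_n)\rangle=Z^{m_1}\otimes\cdots\otimes Z^{m_n}|G_A\rangle$. Two orthonormal bases of $\mathbb{C}^d$ are mutually unbiased if every element of one has squared overlap $1/d$ with every element of the other. *)

theory Defs
  imports Complex_Main "HOL-Library.FuncSet" "Jordan_Normal_Form.Determinant"
begin

text \<open>Computational basis of (C^p)^(tensor n): strings k with k i in {0..p-1} for i < n,
  encoded as extensional functions. A state is a function from such strings to complex amplitudes.\<close>

definition omega :: "nat \<Rightarrow> complex" where
  "omega p = cis (2 * pi / real p)"

definition basis_set :: "nat \<Rightarrow> nat \<Rightarrow> (nat \<Rightarrow> nat) set" where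
  "basis_set n p = PiE {..<n} (\<lambda>_. {..<p})"

definition plus_state :: "nat \<Rightarrow> nat \<Rightarrow> (nat \<Rightarrow> nat) \<Rightarrow> complex" where
  "plus_state n p k = (if k \<in> basis_set n p then 1 / complex_of_real (sqrt (real p)) ^ n else 0)"

definition apply_diag :: "((nat \<Rightarrow> nat) \<Rightarrow> complex) \<Rightarrow> ((nat \<Rightarrow> nat) \<Rightarrow> complex) \<Rightarrow> (nat \<Rightarrow> nat) \<Rightarrow> complex" where
  "apply_diag d \<psi> = (\<lambda>k. d k * \<psi> k)"

definition phase_gate :: "nat \<Rightarrow> nat \<Rightarrow> complex" where
  "phase_gate p x = (if p = 2 then \<i> ^ x else omega p ^ (x * (x - 1) div 2))"

definition U_gate :: "nat \<Rightarrow> nat \<Rightarrow> nat \<Rightarrow> (nat \<Rightarrow> nat) \<Rightarrow> complex" where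
  "U_gate p i j k = (if i = j then phase_gate p (k i) else omega p ^ (k i * k j))"

definition graph_state :: "nat \<Rightarrow> nat \<Rightarrow> int mat \<Rightarrow> (nat \<Rightarrow> nat) \<Rightarrow> complex" where
  "graph_state n p A = apply_diag
     (\<lambda>k. \<Prod>i<n. \<Prod>j\<in>{i..<n}. U_gate p i j k ^ nat (A $$ (i, j))) (plus_state n p)"

definition Z_string :: "nat \<Rightarrow> nat \<Rightarrow> (nat \<Rightarrow> nat) \<Rightarrow> (nat \<Rightarrow> nat) \<Rightarrow> complex" where
  "Z_string n p m k = (\<Prod>i<n. omega p ^ (m i * k i))"

definition graph_basis_state :: "nat \<Rightarrow> nat \<Rightarrow> int mat \<Rightarrow> (nat \<Rightarrow> nat) \<Rightarrow> (nat \<Rightarrow> nat) \<Rightarrow> complex" where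
  "graph_basis_state n p A m = apply_diag (Z_string n p m) (graph_state n p A)"

definition inner_prod :: "nat \<Rightarrow> nat \<Rightarrow> ((nat \<Rightarrow> nat) \<Rightarrow> complex) \<Rightarrow> ((nat \<Rightarrow> nat) \<Rightarrow> complex) \<Rightarrow> complex" where
  "inner_prod n p \<phi> \<psi> = (\<Sum>k\<in>basis_set n p. cnj (\<phi> k) * \<psi> k)"

end

theory Submission imports Defs "HOL-Number_Theory.Cong" begin

lemma omega_pow: "omega p ^ a = cis (2 * pi * real a / real p)"
  unfolding omega_def DeMoivre by (simp add: field_simps)

lemma omega_p: "p > 0 \<Longrightarrow> omega p ^ (p * a) = 1"
proof -
  assume "p > 0"
  have "omega p ^ (p * a) = cis (2 * pi * real a)" unfolding omega_pow using \<open>p>0\<close> by (simp add: field_simps)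
  also have "\<dots> = 1" by (simp add: cis_multiple_2pi)
  finally show ?thesis .
qed

lemma omega_mod: "p > 0 \<Longrightarrow> omega p ^ a = omega p ^ (a mod p)"
proof -
  assume p: "p > 0"
  have "omega p ^ a = omega p ^ (p * (a div p)) * omega p ^ (a mod p)"
    by (metis div_mult_mod_eq mult.commute power_add)
  thus ?thesis using omega_p[OF p] by simp
qed

lemma omega_cong: "p > 0 \<Longrightarrow> [a = b] (mod p) \<Longrightarrow> omega p ^ a = omega p ^ b"
  by (metis cong_def omega_mod)

lemma omega_eq_1: assumes p: "p > 0" and e: "omega p ^ a = 1" shows "p dvd a"
proof -
  have "cos (2 * pi * real a / real p) = 1" using e unfolding omega_pow
    by (metis cis.sel(1) one_complex.sel(1))
  then obtain m :: int where m: "2 * pi * real a / real p = of_int m * 2 * pi" using cos_one_2pi_int by blast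
  hence "real a = m * real p" using p by (simp add: field_simps)
  hence "int a = m * int p" by (metis of_int_eq_iff of_int_mult of_int_of_nat_eq)
  hence "int p dvd int a" by simp
  thus ?thesis by simp
qed

lemma omega_norm: "cmod (omega p ^ a) = 1"
  unfolding omega_pow by simp

lemma geom: assumes p: "p > 0" shows "(\<Sum>x<p. omega p ^ (x * c)) = (if p dvd c then of_nat p else 0)"
proof -
  have eq: "(\<Sum>x<p. omega p ^ (x * c)) = (\<Sum>x<p. (omega p ^ c) ^ x)"
    by (intro sum.cong refl) (metis mult.commute power_mult)
  have pc: "(omega p ^ c) ^ p = 1" using omega_p[OF p, of c] by (simp add: power_mult[symmetric] mult.commute)
  show ?thesis
  proof (cases "p dvd c")
    case True
    then obtain d where "c = p * d" by blast
    hence "omega p ^ c = 1" using omega_p[OF p] by simp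
    thus ?thesis using eq True by simp
  next
    case False
    hence "omega p ^ c \<noteq> 1" using omega_eq_1[OF p] by blast
    thus ?thesis using eq False sum_gp_strict[of "omega p ^ c" p] pc by simp
  qed
qed

lemma int_tri: "int (z * (z - 1)) = int z * (int z - 1)"
  by (cases z) (auto simp: algebra_simps)

lemma two_T: "2 * (z * (z - 1) div 2) = z * (z - 1)" for z :: nat
proof -
  have "even (z * (z - 1))" by (cases z) auto
  thus ?thesis by simp
qed

lemma T_cong:
  fixes p x y :: nat
  assumes p: "prime p" "p \<noteq> 2"
  shows "[((x + y) mod p) * ((x + y) mod p - 1) div 2 = x * (x - 1) div 2 + y * (y - 1) div 2 + x * y] (mod p)"
proof -
  define z where "z = (x + y) mod p"
  define s where "s = x + y"
  have "p > 2" using prime_ge_2_nat[OF p(1)] p(2) by linarith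
  hence odd: "odd p" using prime_odd_nat[OF p(1)] by blast
  have cop: "coprime 2 p" using odd by simp
  have "[z = s] (mod p)" unfolding z_def s_def by (simp add: cong_def)
  hence zs: "[int z = int s] (mod int p)" by (simp only: cong_int_iff)
  have "[int z * (int z - 1) = int s * (int s - 1)] (mod int p)"
    by (intro cong_mult cong_diff zs cong_refl)
  hence "[int (z * (z - 1)) = int (s * (s - 1))] (mod int p)"
    by (simp only: int_tri)
  hence c1: "[z * (z - 1) = s * (s - 1)] (mod p)"
    by (simp only: cong_int_iff)
  have "int ((x+y) * ((x+y) - 1)) = int (x * (x - 1) + y * (y - 1) + 2 * (x * y))"
    unfolding of_nat_add[of "x * (x - 1) + y * (y - 1)"] of_nat_add[of "x * (x - 1)"] int_tri of_nat_mult[of 2]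
    by (simp add: algebra_simps)
  hence "s * (s - 1) = x * (x - 1) + y * (y - 1) + 2 * (x * y)" unfolding s_def by (simp only: of_nat_eq_iff)
  also have "\<dots> = 2 * (x * (x - 1) div 2 + y * (y - 1) div 2 + x * y)"
    using two_T[of x] two_T[of y] by simp
  finally have "[2 * (z * (z - 1) div 2) = 2 * (x * (x - 1) div 2 + y * (y - 1) div 2 + x * y)] (mod p)"
    using c1 two_T[of z] by simp
  hence "[z * (z - 1) div 2 = x * (x - 1) div 2 + y * (y - 1) div 2 + x * y] (mod p)"
    using cong_mult_lcancel_nat[OF cop] by blast
  thus ?thesis unfolding z_def .
qed

lemma phase_add:
  assumes p: "prime p" and x: "x < p" and y: "y < p"
  shows "phase_gate p ((x + y) mod p) = phase_gate p x * phase_gate p y * omega p ^ (x * y)"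
proof (cases "p = 2")
  case True
  have o: "omega 2 = -1"
  proof -
    have "2 * pi / real (2::nat) = pi" by simp
    thus ?thesis unfolding omega_def by simp
  qed
  have ph: "phase_gate 2 z = \<i> ^ z" for z by (simp add: phase_gate_def)
  from x y True have xx: "x = 0 \<or> x = 1" and yy: "y = 0 \<or> y = 1" by auto
  have "\<i> ^ ((x + y) mod 2) = \<i> ^ x * \<i> ^ y * (-1::complex) ^ (x * y)"
    using xx yy by (elim disjE) simp_all
  thus ?thesis unfolding True ph o .
next
  case False
  have p0: "p > 0" using p prime_gt_0_nat by blast
  have "omega p ^ (((x + y) mod p) * ((x + y) mod p - 1) div 2) =
        omega p ^ (x * (x - 1) div 2 + y * (y - 1) div 2 + x * y)"
    by (rule omega_cong[OF p0 T_cong[OF p False]])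
  thus ?thesis unfolding phase_gate_def if_not_P[OF False] power_add .
qed

lemma omega_bilin:
  assumes p: "p > 0"
  shows "omega p ^ (((a + b) mod p) * ((c + d) mod p)) = omega p ^ (a * c) * omega p ^ (b * d) * omega p ^ (a * d + b * c)"
proof -
  have "[((a + b) mod p) * ((c + d) mod p) = a * c + b * d + (a * d + b * c)] (mod p)"
  proof -
    have "[((a + b) mod p) * ((c + d) mod p) = (a + b) * (c + d)] (mod p)"
      by (intro cong_mult) (simp_all add: cong_def)
    thus ?thesis by (simp add: algebra_simps)
  qed
  from omega_cong[OF p this] show ?thesis by (simp add: power_add)
qed

definition addv :: "nat \<Rightarrow> nat \<Rightarrow> (nat \<Rightarrow> nat) \<Rightarrow> (nat \<Rightarrow> nat) \<Rightarrow> (nat \<Rightarrow> nat)" where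
  "addv n p k h = restrict (\<lambda>i. (k i + h i) mod p) {..<n}"

definition Dg :: "nat \<Rightarrow> nat \<Rightarrow> int mat \<Rightarrow> (nat \<Rightarrow> nat) \<Rightarrow> complex" where
  "Dg n p A k = (\<Prod>i<n. \<Prod>j\<in>{i..<n}. U_gate p i j k ^ nat (A $$ (i, j)))"

lemma basis_in: "k \<in> basis_set n p \<Longrightarrow> i < n \<Longrightarrow> k i < p"
  unfolding basis_set_def by auto

lemma basis_out: assumes "k \<in> basis_set n p" "\<not> i < n" shows "k i = undefined"
proof -
  have "i \<notin> {..<n}" using assms(2) by simp
  thus ?thesis by (rule PiE_arb[OF assms(1)[unfolded basis_set_def]])
qed

lemma finite_basis: "finite (basis_set n p)"
  unfolding basis_set_def by (intro finite_PiE) auto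

lemma addv_in: "p > 0 \<Longrightarrow> addv n p k h \<in> basis_set n p"
  unfolding basis_set_def addv_def by auto

lemma addv_inj:
  assumes k: "k \<in> basis_set n p" and p: "p > 0"
  shows "inj_on (addv n p k) (basis_set n p)"
proof (rule inj_onI)
  fix h h' assume h: "h \<in> basis_set n p" and h': "h' \<in> basis_set n p" and e: "addv n p k h = addv n p k h'"
  show "h = h'"
  proof
    fix i show "h i = h' i"
    proof (cases "i < n")
      case True
      have "(k i + h i) mod p = (k i + h' i) mod p" using fun_cong[OF e, of i] True by (simp add: addv_def)
      hence "[k i + h i = k i + h' i] (mod p)" by (simp add: cong_def)
      hence "[h i = h' i] (mod p)" by (simp add: cong_add_lcancel_nat)
      hence "h i mod p = h' i mod p" by (simp add: cong_def)
      thus ?thesis using basis_in[OF h True] basis_in[OF h' True] by simp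
    next
      case False
      thus ?thesis using basis_out[OF h False] basis_out[OF h' False] by simp
    qed
  qed
qed

lemma addv_bij:
  assumes k: "k \<in> basis_set n p" and p: "p > 0"
  shows "bij_betw (addv n p k) (basis_set n p) (basis_set n p)"
proof -
  have sub: "addv n p k ` basis_set n p \<subseteq> basis_set n p" using addv_in[OF p] by (rule image_subsetI)
  have "addv n p k ` basis_set n p = basis_set n p"
    by (rule endo_inj_surj[OF finite_basis sub addv_inj[OF k p]])
  thus ?thesis unfolding bij_betw_def using addv_inj[OF k p] by (rule conjI[rotated])
qed

lemma U_add:
  assumes p: "prime p" and k: "k \<in> basis_set n p" and h: "h \<in> basis_set n p"
    and i: "i < n" and j: "j < n"
  shows "U_gate p i j (addv n p k h) = U_gate p i j k * U_gate p i j h *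
     omega p ^ (if i = j then k i * h i else k i * h j + h i * k j)"
proof (cases "i = j")
  case True
  thus ?thesis using phase_add[OF p basis_in[OF k i] basis_in[OF h i]] i
    by (simp add: U_gate_def addv_def)
next
  case False
  have p0: "p > 0" using p prime_gt_0_nat by blast
  show ?thesis using False i j omega_bilin[OF p0, of "k i" "h i" "k j" "h j"]
    by (simp add: U_gate_def addv_def)
qed

lemma tri_sum:
  fixes a :: "nat \<Rightarrow> nat \<Rightarrow> nat"
  assumes sym: "\<forall>i<N. \<forall>j<N. a i j = a j i"
  shows "m \<le> N \<Longrightarrow> (\<Sum>i<m. \<Sum>j\<in>{i..<m}. (if i = j then k i * h i else k i * h j + h i * k j) * a i j)
          = (\<Sum>i<m. \<Sum>j<m. a i j * k i * h j)"
proof (induction m)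
  case 0
  then show ?case by simp
next
  case (Suc m)
  define F where "F i j = (if i = j then k i * h i else k i * h j + h i * k j) * a i j" for i j
  define G where "G i j = a i j * k i * h j" for i j
  have IH: "(\<Sum>i<m. \<Sum>j\<in>{i..<m}. F i j) = (\<Sum>i<m. \<Sum>j<m. G i j)"
    using Suc by (simp add: F_def G_def)
  have L1: "(\<Sum>i<Suc m. \<Sum>j\<in>{i..<Suc m}. F i j) = (\<Sum>i<m. \<Sum>j\<in>{i..<Suc m}. F i j) + (\<Sum>j\<in>{m..<Suc m}. F m j)"
    by (rule sum.lessThan_Suc)
  have L2: "(\<Sum>i<m. \<Sum>j\<in>{i..<Suc m}. F i j) = (\<Sum>i<m. (\<Sum>j\<in>{i..<m}. F i j) + F i m)"
    by (intro sum.cong refl sum.atLeastLessThan_Suc) simp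
  have L3: "(\<Sum>i<m. (\<Sum>j\<in>{i..<m}. F i j) + F i m) = (\<Sum>i<m. \<Sum>j\<in>{i..<m}. F i j) + (\<Sum>i<m. F i m)"
    by (rule sum.distrib)
  have L4: "(\<Sum>j\<in>{m..<Suc m}. F m j) = G m m" unfolding F_def G_def by simp
  have R1: "(\<Sum>i<Suc m. \<Sum>j<Suc m. G i j) = (\<Sum>i<m. \<Sum>j<Suc m. G i j) + (\<Sum>j<Suc m. G m j)"
    by (rule sum.lessThan_Suc)
  have R2: "(\<Sum>i<m. \<Sum>j<Suc m. G i j) = (\<Sum>i<m. (\<Sum>j<m. G i j) + G i m)"
    by (intro sum.cong refl sum.lessThan_Suc)
  have R3: "(\<Sum>i<m. (\<Sum>j<m. G i j) + G i m) = (\<Sum>i<m. \<Sum>j<m. G i j) + (\<Sum>i<m. G i m)"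
    by (rule sum.distrib)
  have R4: "(\<Sum>j<Suc m. G m j) = (\<Sum>j<m. G m j) + G m m"
    by (rule sum.lessThan_Suc)
  have Fim: "F i m = G i m + G m i" if "i < m" for i
  proof -
    have "a m i = a i m" using sym that Suc.prems by auto
    thus ?thesis using that unfolding F_def G_def by (simp add: algebra_simps)
  qed
  have S: "(\<Sum>i<m. F i m) = (\<Sum>i<m. G i m) + (\<Sum>i<m. G m i)"
  proof -
    have "(\<Sum>i<m. F i m) = (\<Sum>i<m. G i m + G m i)" by (intro sum.cong refl) (simp add: Fim)
    thus ?thesis by (simp only: sum.distrib)
  qed
  have "(\<Sum>i<Suc m. \<Sum>j\<in>{i..<Suc m}. F i j) = (\<Sum>i<Suc m. \<Sum>j<Suc m. G i j)"
    unfolding L1 L2 L3 L4 R1 R2 R3 R4 S IH by (simp only: add.assoc add.left_commute)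
  thus ?case unfolding F_def G_def .
qed


lemma Dg_add:
  assumes p: "prime p" and k: "k \<in> basis_set n p" and h: "h \<in> basis_set n p"
    and symA: "\<forall>i<n. \<forall>j<n. A $$ (i, j) = A $$ (j, i)"
  shows "Dg n p A (addv n p k h) = Dg n p A k * Dg n p A h *
           omega p ^ (\<Sum>i<n. \<Sum>j<n. nat (A $$ (i, j)) * k i * h j)"
proof -
  define a where "a i j = nat (A $$ (i, j))" for i j
  define e where "e i j = (if i = j then k i * h i else k i * h j + h i * k j)" for i j
  have "Dg n p A (addv n p k h) = (\<Prod>i<n. \<Prod>j\<in>{i..<n}.
      (U_gate p i j k ^ a i j * U_gate p i j h ^ a i j) * omega p ^ (e i j * a i j))"
    unfolding Dg_def
  proof (intro prod.cong refl)
    fix i j assume i: "i \<in> {..<n}" and j: "j \<in> {i..<n}"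
    have "U_gate p i j (addv n p k h) = U_gate p i j k * U_gate p i j h * omega p ^ e i j"
      using U_add[OF p k h, of i j] i j unfolding e_def by simp
    thus "U_gate p i j (addv n p k h) ^ nat (A $$ (i, j)) =
      (U_gate p i j k ^ a i j * U_gate p i j h ^ a i j) * omega p ^ (e i j * a i j)"
      unfolding a_def by (simp only: power_mult_distrib power_mult)
  qed
  also have "\<dots> = Dg n p A k * Dg n p A h * omega p ^ (\<Sum>i<n. \<Sum>j\<in>{i..<n}. e i j * a i j)"
    unfolding Dg_def a_def power_sum prod.distrib ..
  also have "(\<Sum>i<n. \<Sum>j\<in>{i..<n}. e i j * a i j) = (\<Sum>i<n. \<Sum>j<n. a i j * k i * h j)"
  proof -
    have "\<forall>i<n. \<forall>j<n. a i j = a j i" using symA unfolding a_def by simp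
    from tri_sum[OF this order.refl, of k h] show ?thesis unfolding e_def .
  qed
  finally show ?thesis unfolding a_def .
qed

lemma Z_add:
  assumes p: "p > 0"
  shows "Z_string n p m (addv n p k h) = Z_string n p m k * Z_string n p m h"
proof -
  have "Z_string n p m (addv n p k h) = (\<Prod>i<n. omega p ^ (m i * k i) * omega p ^ (m i * h i))"
    unfolding Z_string_def
  proof (intro prod.cong refl)
    fix i assume i: "i \<in> {..<n}"
    have "[m i * ((k i + h i) mod p) = m i * k i + m i * h i] (mod p)"
    proof -
      have "[m i * ((k i + h i) mod p) = m i * (k i + h i)] (mod p)"
        by (intro cong_mult cong_refl) (simp add: cong_def)
      thus ?thesis by (simp add: distrib_left)
    qed
    from omega_cong[OF p this] i show "omega p ^ (m i * addv n p k h i) = omega p ^ (m i * k i) * omega p ^ (m i * h i)"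
      by (simp add: addv_def power_add)
  qed
  thus ?thesis unfolding Z_string_def prod.distrib .
qed

lemma omega_norm1: "cmod (omega p) = 1"
  unfolding omega_def by simp

lemma U_norm: "cmod (U_gate p i j k) = 1"
  unfolding U_gate_def phase_gate_def by (simp add: omega_norm1 norm_power)

lemma Dg_norm: "cmod (Dg n p A k) = 1"
  unfolding Dg_def prod_norm[symmetric] by (simp add: norm_power U_norm)

lemma Z_norm: "cmod (Z_string n p m k) = 1"
  unfolding Z_string_def prod_norm[symmetric] by (simp add: omega_norm)

lemma unit_cnj: "cmod z = 1 \<Longrightarrow> cnj z * z = 1"
  using complex_norm_square[of z] by (simp add: mult.commute)

lemma omega_cnj:
  assumes p: "p > 0"
  shows "cnj (omega p ^ a) = omega p ^ ((p - 1) * a)"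
proof -
  have "omega p ^ a * omega p ^ ((p - 1) * a) = omega p ^ (p * a)"
    unfolding power_add[symmetric] using p by (simp add: algebra_simps)
  hence 1: "omega p ^ a * omega p ^ ((p - 1) * a) = 1" using omega_p[OF p] by simp
  have 2: "cnj (omega p ^ a) * omega p ^ a = 1" by (rule unit_cnj[OF omega_norm])
  have "cnj (omega p ^ a) = cnj (omega p ^ a) * (omega p ^ a * omega p ^ ((p - 1) * a))"
    using 1 by simp
  also have "\<dots> = omega p ^ ((p - 1) * a)" using 2 by (simp only: mult.assoc[symmetric]) simp
  finally show ?thesis .
qed

lemma zero_basis: "restrict (\<lambda>_. 0) {..<n} \<in> basis_set n p" if "p > 0"
  using that unfolding basis_set_def by auto

lemma U_zero: "i < n \<Longrightarrow> j < n \<Longrightarrow> U_gate p i j (restrict (\<lambda>_. 0) {..<n}) = 1"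
  unfolding U_gate_def phase_gate_def by simp

lemma Dg_zero: "Dg n p A (restrict (\<lambda>_. 0) {..<n}) = 1"
  unfolding Dg_def by (simp add: U_zero)

lemma Z_zero: "Z_string n p m (restrict (\<lambda>_. 0) {..<n}) = 1"
  unfolding Z_string_def by (intro prod.neutral ballI) simp


lemma exp_rewrite:
  fixes br bs :: "nat \<Rightarrow> nat \<Rightarrow> nat"
  shows "(p - 1) * (\<Sum>i<n. \<Sum>j<n. br i j * k i * h j) + (\<Sum>i<n. \<Sum>j<n. bs i j * k i * h j)
    = (\<Sum>i<n. k i * (\<Sum>j<n. ((p - 1) * br i j + bs i j) * h j))"
proof -
  have "(p - 1) * (\<Sum>i<n. \<Sum>j<n. br i j * k i * h j) + (\<Sum>i<n. \<Sum>j<n. bs i j * k i * h j)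
     = (\<Sum>i<n. (\<Sum>j<n. (p - 1) * (br i j * k i * h j)) + (\<Sum>j<n. bs i j * k i * h j))"
    by (simp only: sum_distrib_left sum.distrib)
  also have "\<dots> = (\<Sum>i<n. \<Sum>j<n. (p - 1) * (br i j * k i * h j) + bs i j * k i * h j)"
    by (simp only: sum.distrib)
  also have "\<dots> = (\<Sum>i<n. \<Sum>j<n. k i * (((p - 1) * br i j + bs i j) * h j))"
    by (intro sum.cong refl) (simp add: algebra_simps)
  also have "\<dots> = (\<Sum>i<n. k i * (\<Sum>j<n. ((p - 1) * br i j + bs i j) * h j))"
    by (simp only: sum_distrib_left)
  finally show ?thesis .
qed

lemma Wsum:
  fixes br bs :: "nat \<Rightarrow> nat \<Rightarrow> nat"
  assumes p: "p > 0"
  shows "(\<Sum>k\<in>basis_set n p. cnj (omega p ^ (\<Sum>i<n. \<Sum>j<n. br i j * k i * h j)) *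
            omega p ^ (\<Sum>i<n. \<Sum>j<n. bs i j * k i * h j))
       = (\<Prod>i<n. if p dvd (\<Sum>j<n. ((p - 1) * br i j + bs i j) * h j) then of_nat p else 0)"
proof -
  define c where "c i = (\<Sum>j<n. ((p - 1) * br i j + bs i j) * h j)" for i
  have "(\<Sum>k\<in>basis_set n p. cnj (omega p ^ (\<Sum>i<n. \<Sum>j<n. br i j * k i * h j)) *
            omega p ^ (\<Sum>i<n. \<Sum>j<n. bs i j * k i * h j))
      = (\<Sum>k\<in>basis_set n p. \<Prod>i<n. omega p ^ (k i * c i))"
  proof (intro sum.cong refl)
    fix k
    show "cnj (omega p ^ (\<Sum>i<n. \<Sum>j<n. br i j * k i * h j)) *
            omega p ^ (\<Sum>i<n. \<Sum>j<n. bs i j * k i * h j) = (\<Prod>i<n. omega p ^ (k i * c i))"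
      unfolding omega_cnj[OF p] power_add[symmetric] power_sum[symmetric] power_mult[symmetric] exp_rewrite c_def ..
  qed
  also have "\<dots> = (\<Prod>i<n. \<Sum>x<p. omega p ^ (x * c i))"
    unfolding basis_set_def by (rule prod_sum_PiE[symmetric]) auto
  also have "\<dots> = (\<Prod>i<n. if p dvd c i then of_nat p else 0)"
    by (simp only: geom[OF p])
  finally show ?thesis unfolding c_def .
qed

lemma nondeg:
  fixes Ar As :: "int mat"
  assumes p: "prime p" and Ar: "Ar \<in> carrier_mat n n" and As: "As \<in> carrier_mat n n"
    and nn: "\<forall>i<n. \<forall>j<n. 0 \<le> Ar $$ (i,j) \<and> 0 \<le> As $$ (i,j)"
    and det: "\<not> int p dvd det (Ar - As)"
    and h: "h \<in> basis_set n p"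
    and c: "\<forall>i<n. p dvd (\<Sum>j<n. ((p - 1) * nat (Ar $$ (i,j)) + nat (As $$ (i,j))) * h j)"
  shows "h = restrict (\<lambda>_. 0) {..<n}"
proof -
  define M where "M = Ar - As"
  have M: "M \<in> carrier_mat n n" using Ar As unfolding M_def by auto
  define v where "v = vec n (\<lambda>j. int (h j))"
  have v: "v \<in> carrier_vec n" unfolding v_def by simp
  have p1: "p \<ge> 1" using prime_gt_0_nat[OF p] by simp
  have Mv: "int p dvd (M *\<^sub>v v) $ i" if i: "i < n" for i
  proof -
    have e: "(M *\<^sub>v v) $ i = (\<Sum>j<n. (Ar $$ (i,j) - As $$ (i,j)) * int (h j))"
      using i M Ar As unfolding M_def v_def by (simp add: scalar_prod_def lessThan_atLeast0)
    have "int (\<Sum>j<n. ((p - 1) * nat (Ar $$ (i,j)) + nat (As $$ (i,j))) * h j)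
        = (\<Sum>j<n. ((int p - 1) * Ar $$ (i,j) + As $$ (i,j)) * int (h j))"
      unfolding of_nat_sum
    proof (intro sum.cong refl)
      fix j assume "j \<in> {..<n}"
      hence "0 \<le> Ar $$ (i,j)" "0 \<le> As $$ (i,j)" using nn i by auto
      thus "int (((p - 1) * nat (Ar $$ (i,j)) + nat (As $$ (i,j))) * h j)
          = ((int p - 1) * Ar $$ (i,j) + As $$ (i,j)) * int (h j)"
        using p1 by (simp add: of_nat_diff)
    qed
    also have "\<dots> = (\<Sum>j<n. int p * (Ar $$ (i,j) * int (h j)) - (Ar $$ (i,j) - As $$ (i,j)) * int (h j))"
      by (intro sum.cong refl) (simp add: algebra_simps)
    also have "\<dots> = int p * (\<Sum>j<n. Ar $$ (i,j) * int (h j)) - (\<Sum>j<n. (Ar $$ (i,j) - As $$ (i,j)) * int (h j))"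
      by (simp only: sum_subtractf sum_distrib_left)
    finally have eq: "(\<Sum>j<n. (Ar $$ (i,j) - As $$ (i,j)) * int (h j)) =
       int p * (\<Sum>j<n. Ar $$ (i,j) * int (h j)) - int (\<Sum>j<n. ((p - 1) * nat (Ar $$ (i,j)) + nat (As $$ (i,j))) * h j)"
      by simp
    have "int p dvd int (\<Sum>j<n. ((p - 1) * nat (Ar $$ (i,j)) + nat (As $$ (i,j))) * h j)"
      using c i by (simp only: of_nat_dvd_iff)
    hence "int p dvd (\<Sum>j<n. (Ar $$ (i,j) - As $$ (i,j)) * int (h j))"
      unfolding eq by (intro dvd_diff dvd_mult2 dvd_refl)
    thus ?thesis unfolding e .
  qed
  have hj: "h j = 0" if j: "j < n" for j
  proof -
    have "((adj_mat M * M) *\<^sub>v v) $ j = (\<Sum>i = 0..<n. det M * (if i = j then 1 else 0) * int (h i))"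
      unfolding adj_mat(3)[OF M] using j v unfolding v_def
      by (simp add: scalar_prod_def)
    also have "\<dots> = (\<Sum>i\<in>{0..<n}. if j = i then det M * int (h i) else 0)"
      by (intro sum.cong refl) simp
    also have "\<dots> = det M * int (h j)" using j by simp
    finally have "((adj_mat M * M) *\<^sub>v v) $ j = det M * int (h j)" .
    moreover have "(adj_mat M * M) *\<^sub>v v = adj_mat M *\<^sub>v (M *\<^sub>v v)"
      by (rule assoc_mult_mat_vec[OF adj_mat(1)[OF M] M v])
    moreover have "int p dvd (adj_mat M *\<^sub>v (M *\<^sub>v v)) $ j"
    proof -
      have "(adj_mat M *\<^sub>v (M *\<^sub>v v)) $ j = (\<Sum>l\<in>{0..<n}. row (adj_mat M) j $ l * (M *\<^sub>v v) $ l)"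
        using j adj_mat(1)[OF M] M by (simp add: scalar_prod_def)
      also have "int p dvd \<dots>"
        by (intro dvd_sum dvd_mult Mv) simp
      finally show ?thesis .
    qed
    ultimately have "int p dvd det M * int (h j)" by simp
    moreover have "prime (int p)" using p by simp
    ultimately have "int p dvd int (h j)" using det unfolding M_def by (simp add: prime_dvd_mult_iff)
    hence "p dvd h j" by (simp only: of_nat_dvd_iff)
    moreover have "h j < p" using basis_in[OF h j] .
    ultimately show ?thesis using nat_dvd_not_less by blast
  qed
  show ?thesis
  proof
    fix i show "h i = restrict (\<lambda>_. 0) {..<n} i"
    proof (cases "i < n")
      case True thus ?thesis using hj by simp
    next
      case False thus ?thesis using basis_out[OF h False] by simp
    qed
  qed
qed


theorem lemma1:
  fixes p n :: nat and Ar As :: "int mat"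
  assumes "prime p" and "n \<ge> 1"
    and "Ar \<in> carrier_mat n n" and "As \<in> carrier_mat n n"
    and "\<forall>i<n. \<forall>j<n. Ar $$ (i, j) \<in> {0..<int p} \<and> As $$ (i, j) \<in> {0..<int p}"
    and "\<forall>i<n. \<forall>j<n. Ar $$ (i, j) = Ar $$ (j, i) \<and> As $$ (i, j) = As $$ (j, i)"
    and "\<not> int p dvd det (Ar - As)"
  shows "\<forall>m\<in>basis_set n p. \<forall>m'\<in>basis_set n p.
           (cmod (inner_prod n p (graph_basis_state n p Ar m) (graph_basis_state n p As m')))\<^sup>2
             = 1 / real p ^ n"
proof (intro ballI)
  fix m m' assume m: "m \<in> basis_set n p" and m': "m' \<in> basis_set n p"
  have p: "prime p" by (rule assms(1))
  have p0: "p > 0" using assms(1) prime_gt_0_nat by blast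
  have symr: "\<forall>i<n. \<forall>j<n. Ar $$ (i, j) = Ar $$ (j, i)" using assms(6) by blast
  have syms: "\<forall>i<n. \<forall>j<n. As $$ (i, j) = As $$ (j, i)" using assms(6) by blast
  have nn: "\<forall>i<n. \<forall>j<n. 0 \<le> Ar $$ (i,j) \<and> 0 \<le> As $$ (i,j)" using assms(5) by simp
  define B where "B = basis_set n p"
  define z where "z = restrict (\<lambda>_. 0::nat) {..<n}"
  have zB: "z \<in> B" unfolding z_def B_def by (rule zero_basis[OF p0])
  define g where "g k = cnj (Z_string n p m k * Dg n p Ar k) * (Z_string n p m' k * Dg n p As k)" for k
  define Lr where "Lr k h = (\<Sum>i<n. \<Sum>j<n. nat (Ar $$ (i, j)) * k i * h j)" for k h :: "nat \<Rightarrow> nat"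
  define Ls where "Ls k h = (\<Sum>i<n. \<Sum>j<n. nat (As $$ (i, j)) * k i * h j)" for k h :: "nat \<Rightarrow> nat"
  define W where "W k h = cnj (omega p ^ Lr k h) * omega p ^ Ls k h" for k h
  define S where "S = (\<Sum>k\<in>B. g k)"
  define cst where "cst = 1 / complex_of_real (sqrt (real p)) ^ n"
  have gs: "graph_basis_state n p A mm = (\<lambda>k. Z_string n p mm k * (Dg n p A k * plus_state n p k))" for A mm
    unfolding graph_basis_state_def graph_state_def apply_diag_def Dg_def ..
  have inner: "inner_prod n p (graph_basis_state n p Ar m) (graph_basis_state n p As m') = S * (cnj cst * cst)"
    unfolding inner_prod_def gs S_def B_def sum_distrib_right
  proof (intro sum.cong refl)
    fix k assume k: "k \<in> basis_set n p"
    have ps: "plus_state n p k = cst" using k unfolding plus_state_def cst_def by simp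
    show "cnj (Z_string n p m k * (Dg n p Ar k * plus_state n p k)) * (Z_string n p m' k * (Dg n p As k * plus_state n p k))
       = g k * (cnj cst * cst)"
      unfolding ps g_def by (simp only: complex_cnj_mult mult_ac)
  qed
  have cc: "cnj cst * cst = 1 / of_nat p ^ n"
  proof -
    have sq: "complex_of_real (sqrt (real p)) * complex_of_real (sqrt (real p)) = of_nat p"
      by (simp flip: of_real_mult)
    have "cnj cst = cst" unfolding cst_def by simp
    thus ?thesis unfolding cst_def by (simp add: power_mult_distrib[symmetric] sq)
  qed
  have gadd: "g (addv n p k h) = g k * g h * W k h" if k: "k \<in> B" and h: "h \<in> B" for k h
  proof -
    have k': "k \<in> basis_set n p" and h': "h \<in> basis_set n p" using k h unfolding B_def by auto
    show ?thesis
      unfolding g_def W_def Lr_def Ls_def Z_add[OF p0] Dg_add[OF p k' h' symr] Dg_add[OF p k' h' syms]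
      by (simp only: complex_cnj_mult mult_ac)
  qed
  have gunit: "cnj (g k) * g k = 1" for k
    by (rule unit_cnj) (simp add: g_def norm_mult Z_norm Dg_norm)
  have Wsum': "(\<Sum>k\<in>B. W k h) = (if h = z then of_nat p ^ n else 0)" if h: "h \<in> B" for h
  proof -
    have "(\<Sum>k\<in>B. W k h) = (\<Prod>i<n. if p dvd (\<Sum>j<n. ((p - 1) * nat (Ar $$ (i,j)) + nat (As $$ (i,j))) * h j) then of_nat p else 0)"
      unfolding W_def Lr_def Ls_def B_def
      using Wsum[OF p0, where br = "\<lambda>i j. nat (Ar $$ (i,j))" and bs = "\<lambda>i j. nat (As $$ (i,j))" and h = h and n = n]
      by simp
    also have "\<dots> = (if h = z then of_nat p ^ n else 0)"
    proof (cases "h = z")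
      case True
      have z0: "(\<Sum>j<n. ((p - 1) * nat (Ar $$ (i,j)) + nat (As $$ (i,j))) * h j) = 0" for i
        using True unfolding z_def by simp
      have "(\<Prod>i<n. if p dvd (\<Sum>j<n. ((p - 1) * nat (Ar $$ (i,j)) + nat (As $$ (i,j))) * h j) then of_nat p else (0::complex)) = of_nat p ^ n"
        by (simp only: z0 dvd_0_right if_True prod_constant card_lessThan)
      thus ?thesis using True by simp
    next
      case False
      have "\<not> (\<forall>i<n. p dvd (\<Sum>j<n. ((p - 1) * nat (Ar $$ (i,j)) + nat (As $$ (i,j))) * h j))"
        using nondeg[OF p assms(3) assms(4) nn assms(7), of h] h False unfolding B_def z_def by blast
      then obtain i where "i < n" "\<not> p dvd (\<Sum>j<n. ((p - 1) * nat (Ar $$ (i,j)) + nat (As $$ (i,j))) * h j)"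
        by blast
      thus ?thesis using False by (simp add: prod_zero_iff) blast
    qed
    finally show ?thesis .
  qed
  have gz: "g z = 1" unfolding g_def z_def Z_zero Dg_zero by simp
  have SS: "cnj S * S = of_nat p ^ n"
  proof -
    have "cnj S * S = (\<Sum>k\<in>B. \<Sum>k'\<in>B. cnj (g k) * g k')"
      unfolding S_def cnj_sum sum_product ..
    also have "\<dots> = (\<Sum>k\<in>B. \<Sum>h\<in>B. cnj (g k) * g (addv n p k h))"
    proof (rule sum.cong[OF refl])
      fix k assume k: "k \<in> B"
      show "(\<Sum>k'\<in>B. cnj (g k) * g k') = (\<Sum>h\<in>B. cnj (g k) * g (addv n p k h))"
        using sum.reindex_bij_betw[OF addv_bij[OF k[unfolded B_def] p0], of "\<lambda>k'. cnj (g k) * g k'"]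
        unfolding B_def by simp
    qed
    also have "\<dots> = (\<Sum>k\<in>B. \<Sum>h\<in>B. g h * W k h)"
    proof (intro sum.cong refl)
      fix k h assume k: "k \<in> B" and h: "h \<in> B"
      have "cnj (g k) * g (addv n p k h) = (cnj (g k) * g k) * (g h * W k h)"
        unfolding gadd[OF k h] by (simp only: mult_ac)
      thus "cnj (g k) * g (addv n p k h) = g h * W k h" unfolding gunit by simp
    qed
    also have "\<dots> = (\<Sum>h\<in>B. g h * (\<Sum>k\<in>B. W k h))"
      by (subst sum.swap) (simp only: sum_distrib_left)
    also have "\<dots> = (\<Sum>h\<in>B. if h = z then g h * of_nat p ^ n else 0)"
      by (intro sum.cong refl) (simp add: Wsum')
    also have "\<dots> = of_nat p ^ n"
      using zB gz finite_basis unfolding B_def by simp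
    finally show ?thesis .
  qed
  have nS: "(cmod S)\<^sup>2 = real p ^ n"
  proof -
    have "complex_of_real ((cmod S)\<^sup>2) = complex_of_real (real p ^ n)"
      unfolding complex_norm_square using SS by (simp add: mult.commute)
    thus ?thesis by (simp only: of_real_eq_iff)
  qed
  have "(cmod (inner_prod n p (graph_basis_state n p Ar m) (graph_basis_state n p As m')))\<^sup>2
      = (cmod S)\<^sup>2 / (real p ^ n)\<^sup>2"
    unfolding inner cc by (simp add: norm_mult norm_divide norm_power power_divide)
  also have "\<dots> = 1 / real p ^ n" unfolding nS using p0 by (simp add: power2_eq_square)
  finally show "(cmod (inner_prod n p (graph_basis_state n p Ar m) (graph_basis_state n p As m')))\<^sup>2
      = 1 / real p ^ n" .
qed

end
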